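(* Let $\alpha>2$ and let $K\ge3$ be an integer. Set $C_{2,K}=\frac1K$ if $K$ is even and $C_{2,K}=\frac1K\cdot\frac{K^2}{K^2-1}$ if $K$ is odd. Then for every $p,q\in\operatorname{relint}(\Delta^K)$, the inequality \[ D_\alpha(p\Vert q)\ \ge\ \frac C2\,\|p-q\|_1^2 \] holds with each of the following choices of $C$: (1) $C=C_{2,K}\cdot\left(\min_{k\in[K]}\min\{p_k,q_k\}\right)^{\alpha-2}$; (2) $C=C_{2,K}\cdot\frac{2}{\alpha(\alpha-1)}\cdot\left(\min_{k\in[K]}p_k\right)^{\alpha-2}$; (3) $C=C_{2,K}\cdot\frac{2}{\alpha}\cdot\left(\min_{k\in[K]}q_k\right)^{\alpha-2}$.
   Context: $[K]=\{1,\dots,K\}$, $\Delta^K=\{p\in[0,1]^K:\sum_k p_k=1\}$, $\operatorname{relint}(\Delta^K)=\Delta^K\cap(0,1)^K$. For $p,q\in(0,+\infty)^K$ and $\alpha\notin\{0,1\}$, $D_\alpha(p\Vert q)=\frac1\alpha\sum_{k=1}^K\frac{p_k^\alpha+(\alpha-1)q_k^\alpha-\alpha p_kq_k^{\alpha-1}}{\alpha-1}$, the Bregman divergence of $-S_\alpha$ with $S_\alpha(p)=\frac{\sum_kp_k^\alpha}{\alpha(1-\alpha)}$. $\|x\|_1=\sum_k|x_k|$. *)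

theory Defs
  imports Complex_Main
begin

text \<open>Vectors in R^K are represented as functions nat => real, only the
coordinates 1..K matter.\<close>

definition relint_simplex :: "nat \<Rightarrow> (nat \<Rightarrow> real) set" where
  "relint_simplex K = {p. (\<forall>k\<in>{1..K}. 0 < p k \<and> p k < 1) \<and> (\<Sum>k=1..K. p k) = 1}"

definition alpha_div :: "real \<Rightarrow> nat \<Rightarrow> (nat \<Rightarrow> real) \<Rightarrow> (nat \<Rightarrow> real) \<Rightarrow> real" where
  "alpha_div \<alpha> K p q = (1 / \<alpha>) * (\<Sum>k=1..K.
      (p k powr \<alpha> + (\<alpha> - 1) * q k powr \<alpha> - \<alpha> * p k * q k powr (\<alpha> - 1)) / (\<alpha> - 1))"

definition l1_dist :: "nat \<Rightarrow> (nat \<Rightarrow> real) \<Rightarrow> (nat \<Rightarrow> real) \<Rightarrow> real" where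
  "l1_dist K p q = (\<Sum>k=1..K. \<bar>p k - q k\<bar>)"

definition C2K :: "nat \<Rightarrow> real" where
  "C2K K = (if even K then 1 / real K else (1 / real K) * (real K ^ 2 / (real K ^ 2 - 1)))"

end

theory Submission
  imports Defs "HOL-Analysis.Analysis"
begin

lemma incr_by_deriv:
  fixes f f' :: "real \<Rightarrow> real"
  assumes "a \<le> b"
    and d: "\<And>x. a \<le> x \<Longrightarrow> x \<le> b \<Longrightarrow> (f has_real_derivative f' x) (at x)"
    and n: "\<And>x. a \<le> x \<Longrightarrow> x \<le> b \<Longrightarrow> f' x \<ge> 0"
  shows "f a \<le> f b"
proof (rule DERIV_nonneg_imp_increasing_open[OF assms(1)])
  show "\<And>x. a < x \<Longrightarrow> x < b \<Longrightarrow> \<exists>y. (f has_real_derivative y) (at x) \<and> 0 \<le> y"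
    using d n by (meson less_imp_le)
  show "continuous_on {a..b} f"
    using d by (meson DERIV_isCont atLeastAtMost_iff continuous_at_imp_continuous_on)
qed

lemma powr_deriv:
  fixes v c :: real assumes "v > 0"
  shows "((\<lambda>v. v powr c) has_real_derivative c * v powr (c - 1)) (at v)"
  using has_real_derivative_powr[OF assms] .

lemma tangent:
  fixes \<alpha> y u :: real
  assumes "\<alpha> > 2" "0 < y" "y \<le> u"
  shows "u powr (\<alpha> - 1) - y powr (\<alpha> - 1) \<ge> (\<alpha> - 1) * y powr (\<alpha> - 2) * (u - y)"
proof -
  let ?f = "\<lambda>v. v powr (\<alpha> - 1) - (\<alpha> - 1) * y powr (\<alpha> - 2) * v"
  have "?f y \<le> ?f u"
  proof (rule incr_by_deriv[OF assms(3)])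
    fix v assume v: "y \<le> v" "v \<le> u"
    hence vp: "v > 0" using assms by auto
    have e: "\<alpha> - 1 - 1 = \<alpha> - 2" by simp
    show "(?f has_real_derivative ((\<alpha> - 1) * v powr (\<alpha> - 2) - (\<alpha> - 1) * y powr (\<alpha> - 2))) (at v)"
      using powr_deriv[OF vp, of "\<alpha> - 1"] vp unfolding e
      by (auto intro!: derivative_eq_intros)
    have "y powr (\<alpha> - 2) \<le> v powr (\<alpha> - 2)"
      using v assms by (intro powr_mono2) auto
    hence "(\<alpha> - 1) * (v powr (\<alpha> - 2) - y powr (\<alpha> - 2)) \<ge> 0"
      using assms by (intro mult_nonneg_nonneg) auto
    thus "(\<alpha> - 1) * v powr (\<alpha> - 2) - (\<alpha> - 1) * y powr (\<alpha> - 2) \<ge> 0"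
      by (simp add: algebra_simps)
  qed
  thus ?thesis by (simp add: algebra_simps)
qed


lemma P1a:
  fixes \<alpha> x y :: real
  assumes "\<alpha> > 2" "0 < x" "x \<le> y"
  shows "x powr \<alpha> + (\<alpha> - 1) * y powr \<alpha> - \<alpha> * x * y powr (\<alpha> - 1)
         \<ge> \<alpha> * (\<alpha> - 1) / 2 * x powr (\<alpha> - 2) * (x - y)\<^sup>2"
proof -
  let ?H = "\<lambda>u. x powr \<alpha> + (\<alpha> - 1) * u powr \<alpha> - \<alpha> * x * u powr (\<alpha> - 1)
         - \<alpha> * (\<alpha> - 1) / 2 * x powr (\<alpha> - 2) * (x - u)\<^sup>2"
  have "?H x \<le> ?H y"
  proof (rule incr_by_deriv[OF assms(3)])
    fix v assume v: "x \<le> v" "v \<le> y"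
    hence vp: "v > 0" using assms by auto
    have e: "\<alpha> - 1 - 1 = \<alpha> - 2" by simp
    show "(?H has_real_derivative
        ((\<alpha> - 1) * (\<alpha> * v powr (\<alpha> - 1)) - \<alpha> * x * ((\<alpha> - 1) * v powr (\<alpha> - 2))
         + \<alpha> * (\<alpha> - 1) * x powr (\<alpha> - 2) * (x - v))) (at v)"
      using powr_deriv[OF vp, of "\<alpha> - 1"] powr_deriv[OF vp, of "\<alpha>"] vp unfolding e
      by (auto intro!: derivative_eq_intros simp: field_simps power2_eq_square)
    have vv: "v powr (\<alpha> - 1) = v * v powr (\<alpha> - 2)"
      using vp by (simp add: powr_mult_base)
    have "x powr (\<alpha> - 2) \<le> v powr (\<alpha> - 2)"
      using v assms by (intro powr_mono2) auto
    hence "(v - x) * (v powr (\<alpha> - 2) - x powr (\<alpha> - 2)) \<ge> 0"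
      using v by auto
    hence "\<alpha> * (\<alpha> - 1) * ((v - x) * (v powr (\<alpha> - 2) - x powr (\<alpha> - 2))) \<ge> 0"
      using assms by auto
    thus "(\<alpha> - 1) * (\<alpha> * v powr (\<alpha> - 1)) - \<alpha> * x * ((\<alpha> - 1) * v powr (\<alpha> - 2))
         + \<alpha> * (\<alpha> - 1) * x powr (\<alpha> - 2) * (x - v) \<ge> 0"
      unfolding vv by (simp add: algebra_simps)
  qed
  moreover have "x * x powr (\<alpha> - 1) = x powr \<alpha>"
    using assms by (simp add: powr_mult_base)
  ultimately show ?thesis by (simp add: algebra_simps)
qed

lemma P1b:
  fixes \<alpha> x y :: real
  assumes "\<alpha> > 2" "0 < y" "y \<le> x"
  shows "x powr \<alpha> + (\<alpha> - 1) * y powr \<alpha> - \<alpha> * x * y powr (\<alpha> - 1)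
         \<ge> \<alpha> * (\<alpha> - 1) / 2 * y powr (\<alpha> - 2) * (x - y)\<^sup>2"
proof -
  let ?H = "\<lambda>u. u powr \<alpha> + (\<alpha> - 1) * y powr \<alpha> - \<alpha> * u * y powr (\<alpha> - 1)
         - \<alpha> * (\<alpha> - 1) / 2 * y powr (\<alpha> - 2) * (u - y)\<^sup>2"
  have "?H y \<le> ?H x"
  proof (rule incr_by_deriv[OF assms(3)])
    fix v assume v: "y \<le> v" "v \<le> x"
    hence vp: "v > 0" using assms by auto
    show "(?H has_real_derivative
        (\<alpha> * v powr (\<alpha> - 1) - \<alpha> * y powr (\<alpha> - 1)
         - \<alpha> * (\<alpha> - 1) * y powr (\<alpha> - 2) * (v - y))) (at v)"
      using powr_deriv[OF vp, of "\<alpha>"] vp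
      by (auto intro!: derivative_eq_intros simp: field_simps power2_eq_square)
    have "v powr (\<alpha> - 1) - y powr (\<alpha> - 1) \<ge> (\<alpha> - 1) * y powr (\<alpha> - 2) * (v - y)"
      using tangent[OF assms(1,2) v(1)] .
    hence "\<alpha> * (v powr (\<alpha> - 1) - y powr (\<alpha> - 1)) \<ge> \<alpha> * ((\<alpha> - 1) * y powr (\<alpha> - 2) * (v - y))"
      using assms by (intro mult_left_mono) auto
    thus "\<alpha> * v powr (\<alpha> - 1) - \<alpha> * y powr (\<alpha> - 1)
         - \<alpha> * (\<alpha> - 1) * y powr (\<alpha> - 2) * (v - y) \<ge> 0"
      by (simp add: algebra_simps)
  qed
  moreover have "y * y powr (\<alpha> - 1) = y powr \<alpha>"
    using assms by (simp add: powr_mult_base)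
  ultimately show ?thesis by (simp add: algebra_simps)
qed


lemma S2:
  fixes \<alpha> t :: real
  assumes "\<alpha> \<ge> 2" "t > 0"
  shows "1 + (\<alpha> - 1) * t powr \<alpha> - \<alpha> * t powr (\<alpha> - 1) - (1 - t)\<^sup>2 \<ge> 0"
proof -
  define L where "L = ln t"
  let ?f = "\<lambda>b. 1 + (b - 1) * exp (b * L) - b * exp ((b - 1) * L) - (1 - t)\<^sup>2"
  have "?f 2 \<le> ?f \<alpha>"
  proof (rule incr_by_deriv[OF assms(1)])
    fix b assume b: "2 \<le> b" "b \<le> \<alpha>"
    show "(?f has_real_derivative
        (exp (b * L) + (b - 1) * (exp (b * L) * L) - exp ((b - 1) * L) - b * (exp ((b - 1) * L) * L))) (at b)"
      by (auto intro!: derivative_eq_intros simp: algebra_simps)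
    have eb: "exp (b * L) = t * exp ((b - 1) * L)"
    proof -
      have "exp (b * L) = exp (L + (b - 1) * L)" by (simp add: algebra_simps)
      also have "\<dots> = t * exp ((b - 1) * L)" using assms by (simp only: exp_add L_def exp_ln)
      finally show ?thesis .
    qed
    have tl: "(1 - t) * L \<le> 0"
      unfolding L_def using assms
      by (cases "t \<le> 1") (auto intro: mult_nonneg_nonpos mult_nonpos_nonneg)
    have "(b - 1) * ((1 - t) * L) \<le> 0"
      by (rule mult_nonneg_nonpos) (use b tl in auto)
    moreover have "L \<le> t - 1" unfolding L_def using assms ln_le_minus_one by auto
    ultimately have "((b - 1) * t - b) * L + (t - 1) \<ge> 0"
      by (simp add: algebra_simps)
    hence G: "exp ((b - 1) * L) * (((b - 1) * t - b) * L + (t - 1)) \<ge> 0"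
      by simp
    have "exp (b * L) + (b - 1) * (exp (b * L) * L) - exp ((b - 1) * L) - b * (exp ((b - 1) * L) * L)
       = exp ((b - 1) * L) * (((b - 1) * t - b) * L + (t - 1))"
      unfolding eb by (simp add: algebra_simps)
    thus "exp (b * L) + (b - 1) * (exp (b * L) * L) - exp ((b - 1) * L) - b * (exp ((b - 1) * L) * L) \<ge> 0"
      using G by linarith
  qed
  moreover have "\<And>c. t powr c = exp (c * L)" using assms by (simp add: powr_def L_def)
  moreover have "?f 2 = 0"
  proof -
    have eL: "exp L = t" using assms by (simp add: L_def)
    have e2: "exp (2 * L) = t * t" by (simp only: mult_2 exp_add eL)
    have e1: "exp ((2 - 1) * L) = t" using eL by simp
    show ?thesis unfolding e1 e2 by (simp add: power2_eq_square algebra_simps)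
  qed
  ultimately show ?thesis by simp
qed

lemma S3:
  fixes \<alpha> s :: real
  assumes "\<alpha> \<ge> 2" "s > 0"
  shows "s powr \<alpha> + (\<alpha> - 1) - \<alpha> * s - (\<alpha> - 1) * (1 - s)\<^sup>2 \<ge> 0"
proof -
  define L where "L = ln s"
  let ?f = "\<lambda>b. exp (b * L) + (b - 1) - b * s - (b - 1) * (1 - s)\<^sup>2"
  have "?f 2 \<le> ?f \<alpha>"
  proof (rule incr_by_deriv[OF assms(1)])
    fix b assume b: "2 \<le> b" "b \<le> \<alpha>"
    show "(?f has_real_derivative (exp (b * L) * L + 1 - s - (1 - s)\<^sup>2)) (at b)"
      by (auto intro!: derivative_eq_intros simp: algebra_simps)
    have A: "(exp (b * L) - exp (2 * L)) * L \<ge> 0"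
    proof (cases "L \<ge> 0")
      case True
      have "2 * L \<le> b * L" by (rule mult_right_mono) (use b True in auto)
      hence e: "exp (2 * L) \<le> exp (b * L)" by simp
      show ?thesis by (rule mult_nonneg_nonneg) (use True e in auto)
    next
      case False
      have "b * L \<le> 2 * L" by (rule mult_right_mono_neg) (use b False in auto)
      hence e: "exp (b * L) \<le> exp (2 * L)" by simp
      show ?thesis by (rule mult_nonpos_nonpos) (use False e in auto)
    qed
    have eL: "exp L = s" using assms by (simp add: L_def)
    have e2: "exp (2 * L) = s * s" by (simp only: mult_2 exp_add eL)
    have "ln (1 / s) \<le> 1 / s - 1" using assms ln_le_minus_one by auto
    moreover have "ln (1 / s) = - L" using assms by (simp add: L_def ln_div)
    ultimately have N: "- L \<le> 1 / s - 1" by simp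
    have "s * (- L) \<le> s * (1 / s - 1)" by (rule mult_left_mono[OF N]) (use assms in simp)
    also have "\<dots> = 1 - s" using assms by (simp add: field_simps)
    finally have B: "s * L + 1 - s \<ge> 0" by simp
    have C: "s * (s * L + 1 - s) \<ge> 0" using B assms by simp
    have "exp (b * L) * L + 1 - s - (1 - s)\<^sup>2
          = (exp (b * L) - exp (2 * L)) * L + s * (s * L + 1 - s)"
      unfolding e2 by (simp add: algebra_simps power2_eq_square)
    thus "exp (b * L) * L + 1 - s - (1 - s)\<^sup>2 \<ge> 0"
      using A C by linarith
  qed
  moreover have "s powr \<alpha> = exp (\<alpha> * L)" using assms by (simp add: powr_def L_def)
  moreover have "exp (2 * L) = s\<^sup>2"
  proof -
    have eL: "exp L = s" using assms by (simp add: L_def)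
    show ?thesis by (simp only: mult_2 exp_add eL power2_eq_square)
  qed
  ultimately show ?thesis by (simp add: power2_eq_square algebra_simps)
qed

lemma powr_split:
  fixes x \<alpha> :: real assumes "x > 0"
  shows "x powr (\<alpha> - 1) = x powr (\<alpha> - 2) * x" "x powr \<alpha> = x powr (\<alpha> - 2) * x * x"
proof -
  have "x powr (\<alpha> - 1) = x powr ((\<alpha> - 2) + 1)" by simp
  also have "\<dots> = x powr (\<alpha> - 2) * x" using assms by (simp only: powr_add powr_one)
  finally show "x powr (\<alpha> - 1) = x powr (\<alpha> - 2) * x" .
  have "x powr \<alpha> = x powr ((\<alpha> - 2) + 1 + 1)" by simp
  also have "\<dots> = x powr (\<alpha> - 2) * x * x" using assms by (simp only: powr_add powr_one)
  finally show "x powr \<alpha> = x powr (\<alpha> - 2) * x * x" .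
qed

lemma P2:
  fixes \<alpha> x y :: real
  assumes "\<alpha> > 2" "0 < x" "0 < y"
  shows "x powr \<alpha> + (\<alpha> - 1) * y powr \<alpha> - \<alpha> * x * y powr (\<alpha> - 1)
         \<ge> x powr (\<alpha> - 2) * (x - y)\<^sup>2"
proof -
  define t where "t = y / x"
  have tp: "t > 0" using assms by (simp add: t_def)
  have y: "y = x * t" using assms by (simp add: t_def)
  define A where "A = x powr (\<alpha> - 2)"
  have S: "0 \<le> (A * x * x) * (1 + (\<alpha> - 1) * t powr \<alpha> - \<alpha> * t powr (\<alpha> - 1) - (1 - t)\<^sup>2)"
    using S2[of \<alpha> t] assms tp by (simp add: A_def)
  have "x powr \<alpha> + (\<alpha> - 1) * y powr \<alpha> - \<alpha> * x * y powr (\<alpha> - 1) - x powr (\<alpha> - 2) * (x - y)\<^sup>2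
      = (A * x * x) * (1 + (\<alpha> - 1) * t powr \<alpha> - \<alpha> * t powr (\<alpha> - 1) - (1 - t)\<^sup>2)"
  proof -
    have a1: "x powr (\<alpha> - 1) = A * x" "x powr \<alpha> = A * x * x"
      unfolding A_def by (rule powr_split(1)[OF assms(2)], rule powr_split(2)[OF assms(2)])
    have a2: "(x * t) powr c = x powr c * t powr c" for c using assms tp by (simp add: powr_mult)
    show ?thesis unfolding y a2 a1 A_def[symmetric] by (simp add: algebra_simps power2_eq_square)
  qed
  thus ?thesis using S by linarith
qed

lemma P3:
  fixes \<alpha> x y :: real
  assumes "\<alpha> > 2" "0 < x" "0 < y"
  shows "x powr \<alpha> + (\<alpha> - 1) * y powr \<alpha> - \<alpha> * x * y powr (\<alpha> - 1)
         \<ge> (\<alpha> - 1) * y powr (\<alpha> - 2) * (x - y)\<^sup>2"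
proof -
  define s where "s = x / y"
  have sp: "s > 0" using assms by (simp add: s_def)
  have x: "x = y * s" using assms by (simp add: s_def)
  define A where "A = y powr (\<alpha> - 2)"
  have S: "0 \<le> (A * y * y) * (s powr \<alpha> + (\<alpha> - 1) - \<alpha> * s - (\<alpha> - 1) * (1 - s)\<^sup>2)"
    using S3[of \<alpha> s] assms sp by (simp add: A_def)
  have "x powr \<alpha> + (\<alpha> - 1) * y powr \<alpha> - \<alpha> * x * y powr (\<alpha> - 1) - (\<alpha> - 1) * y powr (\<alpha> - 2) * (x - y)\<^sup>2
      = (A * y * y) * (s powr \<alpha> + (\<alpha> - 1) - \<alpha> * s - (\<alpha> - 1) * (1 - s)\<^sup>2)"
  proof -
    have a1: "y powr (\<alpha> - 1) = A * y" "y powr \<alpha> = A * y * y"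
      unfolding A_def by (rule powr_split(1)[OF assms(3)], rule powr_split(2)[OF assms(3)])
    have a2: "(y * s) powr c = y powr c * s powr c" for c using assms sp by (simp add: powr_mult)
    show ?thesis unfolding x a2 a1 A_def[symmetric] by (simp add: algebra_simps power2_eq_square)
  qed
  thus ?thesis using S by linarith
qed
lemma Q:
  fixes d :: "nat \<Rightarrow> real" and I :: "nat set"
  assumes fin: "finite I" and cI: "card I = K" and sum0: "(\<Sum>k\<in>I. d k) = 0"
  shows "(\<Sum>k\<in>I. (d k)\<^sup>2) \<ge>
     (if even K then 1 / real K else (1 / real K) * (real K ^ 2 / (real K ^ 2 - 1))) * (\<Sum>k\<in>I. \<bar>d k\<bar>)\<^sup>2"
proof -
  define P where "P = {k\<in>I. d k > 0}"
  define N where "N = {k\<in>I. \<not> d k > 0}"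
  have fP: "finite P" and fN: "finite N" using fin by (auto simp: P_def N_def)
  have disj: "P \<inter> N = {}" and un: "P \<union> N = I" by (auto simp: P_def N_def)
  have split: "sum f I = sum f P + sum f N" for f :: "nat \<Rightarrow> real"
    using sum.union_disjoint[OF fP fN disj, of f] un by simp
  define S where "S = sum d P"
  have sN: "sum d N = - S" using sum0 split[of d] by (simp add: S_def)
  have aP: "sum (\<lambda>k. \<bar>d k\<bar>) P = S" unfolding S_def by (rule sum.cong) (auto simp: P_def)
  have aN: "sum (\<lambda>k. \<bar>d k\<bar>) N = S"
  proof -
    have "sum (\<lambda>k. \<bar>d k\<bar>) N = sum (\<lambda>k. - d k) N" by (rule sum.cong) (auto simp: N_def)
    thus ?thesis using sN by (simp add: sum_negf)
  qed
  have L1: "(\<Sum>k\<in>I. \<bar>d k\<bar>) = 2 * S" using split[of "\<lambda>k. \<bar>d k\<bar>"] aP aN by simp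
  define X where "X = (\<Sum>k\<in>P. (d k)\<^sup>2)"
  define Y where "Y = (\<Sum>k\<in>N. (d k)\<^sup>2)"
  have XY: "(\<Sum>k\<in>I. (d k)\<^sup>2) = X + Y" using split[of "\<lambda>k. (d k)\<^sup>2"] by (simp add: X_def Y_def)
  have X0: "X \<ge> 0" and Y0: "Y \<ge> 0" by (auto simp: X_def Y_def intro: sum_nonneg)
  define a where "a = card P"
  define b where "b = card N"
  have ab: "a + b = K" using card_Un_disjoint[OF fP fN disj] un cI by (simp add: a_def b_def)
  have CX: "S\<^sup>2 \<le> X * real a" using sum_squared_le_sum_of_squares[of d P] by (simp add: S_def X_def a_def)
  have CY: "S\<^sup>2 \<le> Y * real b" using sum_squared_le_sum_of_squares[of d N] sN by (simp add: Y_def b_def)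
  define C where "C = (if even K then 1 / real K else (1 / real K) * (real K ^ 2 / (real K ^ 2 - 1)))"
  show ?thesis
  proof (cases "a = 0 \<or> b = 0")
    case True
    hence "S = 0" using CX CY by auto
    thus ?thesis using XY X0 Y0 L1 by simp
  next
    case False
    hence a1: "real a \<ge> 1" and b1: "real b \<ge> 1" by auto
    have Kpos: "real K \<ge> 2" using ab a1 b1 by linarith
    have key: "4 * C * (real a * real b) \<le> real K"
    proof (cases "even K")
      case True
      have "(real a + real b)^2 = (real a - real b)^2 + 4 * (real a * real b)"
        by (simp add: power2_eq_square algebra_simps)
      moreover have "0 \<le> (real a - real b)^2" by simp
      ultimately have "4 * (real a * real b) \<le> (real a + real b)^2" by linarith
      hence "4 * (real a * real b) \<le> real K * real K" using ab by (simp add: power2_eq_square flip: of_nat_add)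
      thus ?thesis using True Kpos by (simp add: C_def field_simps)
    next
      case False
      have "a \<noteq> b" using False ab by auto
      hence "a + 1 \<le> b \<or> b + 1 \<le> a" by linarith
      hence "real a + 1 \<le> real b \<or> real b + 1 \<le> real a"
        by (metis of_nat_1 of_nat_add of_nat_le_iff)
      hence x1: "1 \<le> \<bar>real a - real b\<bar>" by linarith
      have "1 * 1 \<le> \<bar>real a - real b\<bar> * \<bar>real a - real b\<bar>"
        by (rule mult_mono) (use x1 in auto)
      hence sq: "(real a - real b)^2 \<ge> 1" by (simp add: power2_eq_square)
      have rK: "real K = real a + real b" using ab by (metis of_nat_add)
      have "real K * real K = (real a - real b)^2 + 4 * (real a * real b)"
        unfolding rK by (simp add: power2_eq_square algebra_simps)
      hence h: "4 * (real a * real b) \<le> real K * real K - 1" using sq by linarith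
      have "real K * 2 \<le> real K * real K" using Kpos by (intro mult_left_mono) auto
      hence pos: "real K * real K - 1 > 0" using Kpos by linarith
      have "4 * (real a * real b) * real K \<le> (real K * real K - 1) * real K"
        using h Kpos by (intro mult_right_mono) auto
      hence "4 * (real a * real b) * real K / (real K * real K - 1) \<le> real K"
        using pos by (simp add: pos_divide_le_eq mult.commute)
      moreover have "C = real K / (real K * real K - 1)"
        using False Kpos pos by (simp add: C_def power2_eq_square)
      ultimately show ?thesis by (simp add: mult.commute mult.left_commute)
    qed
    have ab0: "real a * real b > 0" using a1 b1 by simp
    have "S\<^sup>2 * real b \<le> X * real a * real b" using CX b1 by (simp add: mult_right_mono)
    moreover have "S\<^sup>2 * real a \<le> Y * real b * real a" using CY a1 by (simp add: mult_right_mono)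
    moreover have "S\<^sup>2 * real K = S\<^sup>2 * real b + S\<^sup>2 * real a"
      by (simp add: ab[symmetric] algebra_simps)
    moreover have "(X + Y) * (real a * real b) = X * real a * real b + Y * real b * real a"
      by (simp add: algebra_simps)
    ultimately have "S\<^sup>2 * real K \<le> (X + Y) * (real a * real b)"
      by linarith
    moreover have "4 * C * S\<^sup>2 * (real a * real b) \<le> S\<^sup>2 * real K"
      using mult_left_mono[OF key, of "S\<^sup>2"] by (simp add: algebra_simps)
    ultimately have "4 * C * S\<^sup>2 * (real a * real b) \<le> (X + Y) * (real a * real b)" by linarith
    hence "4 * C * S\<^sup>2 \<le> X + Y" using ab0 by (rule mult_right_le_imp_le)
    thus ?thesis using XY L1 by (simp add: C_def[symmetric] power2_eq_square algebra_simps)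
  qed
qed

lemma combine:
  fixes \<alpha> w Cc :: real and K :: nat and p q :: "nat \<Rightarrow> real"
  assumes a: "\<alpha> > 2" and w: "w \<ge> 0"
    and E: "\<And>k. k \<in> {1..K} \<Longrightarrow>
       p k powr \<alpha> + (\<alpha> - 1) * q k powr \<alpha> - \<alpha> * p k * q k powr (\<alpha> - 1) \<ge> w * (p k - q k)\<^sup>2"
    and Qb: "(\<Sum>k=1..K. (p k - q k)\<^sup>2) \<ge> Cc * (l1_dist K p q)\<^sup>2"
  shows "alpha_div \<alpha> K p q \<ge> w / (\<alpha> * (\<alpha> - 1)) * Cc * (l1_dist K p q)\<^sup>2"
proof -
  have pos: "\<alpha> * (\<alpha> - 1) > 0" using a by simp
  have eq: "alpha_div \<alpha> K p q = (\<Sum>k=1..K. (p k powr \<alpha> + (\<alpha> - 1) * q k powr \<alpha> - \<alpha> * p k * q k powr (\<alpha> - 1)) / (\<alpha> * (\<alpha> - 1)))"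
    unfolding alpha_div_def sum_distrib_left by (rule sum.cong) auto
  have "(\<Sum>k=1..K. w * (p k - q k)\<^sup>2 / (\<alpha> * (\<alpha> - 1)))
      \<le> (\<Sum>k=1..K. (p k powr \<alpha> + (\<alpha> - 1) * q k powr \<alpha> - \<alpha> * p k * q k powr (\<alpha> - 1)) / (\<alpha> * (\<alpha> - 1)))"
    by (rule sum_mono, rule divide_right_mono) (use E pos in auto)
  moreover have "(\<Sum>k=1..K. w * (p k - q k)\<^sup>2 / (\<alpha> * (\<alpha> - 1)))
      = w / (\<alpha> * (\<alpha> - 1)) * (\<Sum>k=1..K. (p k - q k)\<^sup>2)"
    by (simp add: sum_distrib_left)
  moreover have "w / (\<alpha> * (\<alpha> - 1)) * (Cc * (l1_dist K p q)\<^sup>2) \<le> w / (\<alpha> * (\<alpha> - 1)) * (\<Sum>k=1..K. (p k - q k)\<^sup>2)"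
    by (rule mult_left_mono[OF Qb]) (use w pos in simp)
  ultimately show ?thesis unfolding eq by (simp add: mult.assoc)
qed

lemma scale_le:
  fixes c M m \<alpha> z :: real
  assumes "0 \<le> c" "0 < M" "M \<le> m" "\<alpha> \<ge> 2"
  shows "c * M powr (\<alpha> - 2) * z\<^sup>2 \<le> c * m powr (\<alpha> - 2) * z\<^sup>2"
proof -
  have "M powr (\<alpha> - 2) \<le> m powr (\<alpha> - 2)" using assms by (intro powr_mono2) auto
  hence "c * M powr (\<alpha> - 2) \<le> c * m powr (\<alpha> - 2)" using assms(1) by (rule mult_left_mono)
  thus ?thesis by (rule mult_right_mono) simp
qed

theorem proposition3:
  fixes \<alpha> :: real and K :: nat and p q :: "nat \<Rightarrow> real"
  assumes "\<alpha> > 2" and "K \<ge> 3"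
    and "p \<in> relint_simplex K" and "q \<in> relint_simplex K"
  shows "alpha_div \<alpha> K p q \<ge>
           (C2K K * (Min ((\<lambda>k. min (p k) (q k)) ` {1..K})) powr (\<alpha> - 2)) / 2
             * (l1_dist K p q)\<^sup>2
     \<and> alpha_div \<alpha> K p q \<ge>
           (C2K K * (2 / (\<alpha> * (\<alpha> - 1))) * (Min (p ` {1..K})) powr (\<alpha> - 2)) / 2
             * (l1_dist K p q)\<^sup>2
     \<and> alpha_div \<alpha> K p q \<ge>
           (C2K K * (2 / \<alpha>) * (Min (q ` {1..K})) powr (\<alpha> - 2)) / 2
             * (l1_dist K p q)\<^sup>2"
  proof -
  let ?I = "{1..K}"
  have fin: "finite ?I" and ne: "?I \<noteq> {}" using assms(2) by auto
  have pp: "\<And>k. k \<in> ?I \<Longrightarrow> p k > 0" and qp: "\<And>k. k \<in> ?I \<Longrightarrow> q k > 0"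
    using assms(3,4) by (auto simp: relint_simplex_def)
  have sp: "(\<Sum>k=1..K. p k) = 1" and sq: "(\<Sum>k=1..K. q k) = 1"
    using assms(3,4) by (auto simp: relint_simplex_def)
  have a2: "\<alpha> \<ge> 2" using assms(1) by simp
  have Qb: "(\<Sum>k=1..K. (p k - q k)\<^sup>2) \<ge> C2K K * (l1_dist K p q)\<^sup>2"
  proof -
    have "(\<Sum>k\<in>?I. p k - q k) = 0" using sp sq by (simp add: sum_subtractf)
    from Q[OF fin _ this, of K] show ?thesis by (simp add: C2K_def l1_dist_def)
  qed
  define M1 where "M1 = Min ((\<lambda>k. min (p k) (q k)) ` ?I)"
  define Mp where "Mp = Min (p ` ?I)"
  define Mq where "Mq = Min (q ` ?I)"
  have M1le: "M1 \<le> min (p k) (q k)" if k: "k \<in> ?I" for k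
    unfolding M1_def by (rule Min_le) (use fin k in auto)
  have Mple: "\<And>k. k \<in> ?I \<Longrightarrow> Mp \<le> p k" unfolding Mp_def using fin by auto
  have Mqle: "\<And>k. k \<in> ?I \<Longrightarrow> Mq \<le> q k" unfolding Mq_def using fin by auto
  have "M1 \<in> (\<lambda>k. min (p k) (q k)) ` ?I" unfolding M1_def using fin ne by (intro Min_in) auto
  hence M1p: "M1 > 0" using pp qp by auto
  have "Mp \<in> p ` ?I" unfolding Mp_def using fin ne by (intro Min_in) auto
  hence Mpp: "Mp > 0" using pp by auto
  have "Mq \<in> q ` ?I" unfolding Mq_def using fin ne by (intro Min_in) auto
  hence Mqp: "Mq > 0" using qp by auto
  have apos: "\<alpha> * (\<alpha> - 1) > 0" using assms(1) by simp
  have r1: "alpha_div \<alpha> K p q \<ge> (\<alpha> * (\<alpha> - 1) / 2 * M1 powr (\<alpha> - 2)) / (\<alpha> * (\<alpha> - 1)) * C2K K * (l1_dist K p q)\<^sup>2"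
  proof (rule combine[OF assms(1) _ _ Qb])
    show "0 \<le> \<alpha> * (\<alpha> - 1) / 2 * M1 powr (\<alpha> - 2)" using apos by simp
    fix k assume k: "k \<in> ?I"
    show "\<alpha> * (\<alpha> - 1) / 2 * M1 powr (\<alpha> - 2) * (p k - q k)\<^sup>2
        \<le> p k powr \<alpha> + (\<alpha> - 1) * q k powr \<alpha> - \<alpha> * p k * q k powr (\<alpha> - 1)"
    proof (cases "p k \<le> q k")
      case True
      have "\<alpha> * (\<alpha> - 1) / 2 * M1 powr (\<alpha> - 2) * (p k - q k)\<^sup>2 \<le> \<alpha> * (\<alpha> - 1) / 2 * p k powr (\<alpha> - 2) * (p k - q k)\<^sup>2"
        using M1le[OF k] True M1p apos a2 by (intro scale_le) auto
      thus ?thesis using P1a[OF assms(1) pp[OF k] True] by linarith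
    next
      case False
      have "\<alpha> * (\<alpha> - 1) / 2 * M1 powr (\<alpha> - 2) * (p k - q k)\<^sup>2 \<le> \<alpha> * (\<alpha> - 1) / 2 * q k powr (\<alpha> - 2) * (p k - q k)\<^sup>2"
        using M1le[OF k] False M1p apos a2 by (intro scale_le) auto
      thus ?thesis using P1b[OF assms(1) qp[OF k], of "p k"] False by linarith
    qed
  qed
  have r2: "alpha_div \<alpha> K p q \<ge> (1 * Mp powr (\<alpha> - 2)) / (\<alpha> * (\<alpha> - 1)) * C2K K * (l1_dist K p q)\<^sup>2"
  proof (rule combine[OF assms(1) _ _ Qb])
    show "0 \<le> 1 * Mp powr (\<alpha> - 2)" by simp
    fix k assume k: "k \<in> ?I"
    have "1 * Mp powr (\<alpha> - 2) * (p k - q k)\<^sup>2 \<le> 1 * p k powr (\<alpha> - 2) * (p k - q k)\<^sup>2"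
      using Mple[OF k] Mpp a2 by (intro scale_le) auto
    thus "1 * Mp powr (\<alpha> - 2) * (p k - q k)\<^sup>2
        \<le> p k powr \<alpha> + (\<alpha> - 1) * q k powr \<alpha> - \<alpha> * p k * q k powr (\<alpha> - 1)"
      using P2[OF assms(1) pp[OF k] qp[OF k]] by linarith
  qed
  have r3: "alpha_div \<alpha> K p q \<ge> ((\<alpha> - 1) * Mq powr (\<alpha> - 2)) / (\<alpha> * (\<alpha> - 1)) * C2K K * (l1_dist K p q)\<^sup>2"
  proof (rule combine[OF assms(1) _ _ Qb])
    show "0 \<le> (\<alpha> - 1) * Mq powr (\<alpha> - 2)" using assms(1) by simp
    fix k assume k: "k \<in> ?I"
    have "(\<alpha> - 1) * Mq powr (\<alpha> - 2) * (p k - q k)\<^sup>2 \<le> (\<alpha> - 1) * q k powr (\<alpha> - 2) * (p k - q k)\<^sup>2"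
      using Mqle[OF k] Mqp a2 by (intro scale_le) auto
    thus "(\<alpha> - 1) * Mq powr (\<alpha> - 2) * (p k - q k)\<^sup>2
        \<le> p k powr \<alpha> + (\<alpha> - 1) * q k powr \<alpha> - \<alpha> * p k * q k powr (\<alpha> - 1)"
      using P3[OF assms(1) pp[OF k] qp[OF k]] by linarith
  qed
  have e1: "(\<alpha> * (\<alpha> - 1) / 2 * M1 powr (\<alpha> - 2)) / (\<alpha> * (\<alpha> - 1)) * C2K K
      = (C2K K * M1 powr (\<alpha> - 2)) / 2"
  proof -
    have gen: "\<And>D M C :: real. D \<noteq> 0 \<Longrightarrow> (D / 2 * M) / D * C = (C * M) / 2"
      by (simp add: field_simps)
    show ?thesis by (rule gen) (use apos assms(1) in simp)
  qed
  have e2: "(1 * Mp powr (\<alpha> - 2)) / (\<alpha> * (\<alpha> - 1)) * C2K K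
      = (C2K K * (2 / (\<alpha> * (\<alpha> - 1))) * Mp powr (\<alpha> - 2)) / 2"
  proof -
    have gen: "\<And>D M C :: real. D \<noteq> 0 \<Longrightarrow> (1 * M) / D * C = (C * (2 / D) * M) / 2"
      by (simp add: field_simps)
    show ?thesis by (rule gen) (use apos assms(1) in simp)
  qed
  have e3: "((\<alpha> - 1) * Mq powr (\<alpha> - 2)) / (\<alpha> * (\<alpha> - 1)) * C2K K
      = (C2K K * (2 / \<alpha>) * Mq powr (\<alpha> - 2)) / 2"
  proof -
    have gen: "\<And>a b M C :: real. a \<noteq> 0 \<Longrightarrow> b \<noteq> 0 \<Longrightarrow> (b * M) / (a * b) * C = (C * (2 / a) * M) / 2"
      by (simp add: field_simps)
    show ?thesis by (rule gen) (use assms(1) in simp_all)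
  qed
  from r1 have t1: "alpha_div \<alpha> K p q \<ge> (C2K K * M1 powr (\<alpha> - 2)) / 2 * (l1_dist K p q)\<^sup>2"
    by (simp only: e1)
  from r2 have t2: "alpha_div \<alpha> K p q \<ge> (C2K K * (2 / (\<alpha> * (\<alpha> - 1))) * Mp powr (\<alpha> - 2)) / 2 * (l1_dist K p q)\<^sup>2"
    by (simp only: e2)
  from r3 have t3: "alpha_div \<alpha> K p q \<ge> (C2K K * (2 / \<alpha>) * Mq powr (\<alpha> - 2)) / 2 * (l1_dist K p q)\<^sup>2"
    by (simp only: e3)
  show ?thesis using t1 t2 t3 unfolding M1_def Mp_def Mq_def by blast
qed

end
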